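(* Let $d\ge2$, $L\ge1$ an integer and $0<x<\frac{1}{(2d-1)!}$. Let $\Gamma\subset B_L=[0,L)^d\cap\mathbb Z^d$ be such that for every $i\in\{1,\dots,d\}$, $\Gamma$ contains (entirely) at least $(1-x)L^{d-1}$ columns of $B_L$ parallel to $e_i$. Then $\Gamma$ contains a connected subset (for the nearest-neighbour graph of $\mathbb Z^d$) of cardinality at least $(1-(2d-1)!\,x)L^d$.
   Context: $e_1,\dots,e_d$ is the standard basis of $\mathbb Z^d$. A column of $B_L$ parallel to $e_i$ is a set of the form $\{y\in B_L: y_j=a_j\text{ for all }j\neq i\}$ for fixed integers $(a_j)_{j\neq i}$ with $0\le a_j<L$. *)

theory Defs
  imports Complex_Main
begin

text \<open>Points of Z^d are represented as functions nat => int, with coordinates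
  indexed by 0..d-1 and all coordinates >= d equal to 0.\<close>

definition box :: "nat \<Rightarrow> nat \<Rightarrow> (nat \<Rightarrow> int) set" where
  "box d L = {y. (\<forall>j<d. 0 \<le> y j \<and> y j < int L) \<and> (\<forall>j\<ge>d. y j = 0)}"

definition column :: "nat \<Rightarrow> nat \<Rightarrow> nat \<Rightarrow> (nat \<Rightarrow> int) set \<Rightarrow> bool" where
  "column d L i C \<longleftrightarrow> (\<exists>a :: nat \<Rightarrow> int.
      (\<forall>j<d. j \<noteq> i \<longrightarrow> 0 \<le> a j \<and> a j < int L) \<and>
      C = {y \<in> box d L. \<forall>j<d. j \<noteq> i \<longrightarrow> y j = a j})"

definition nn_adj :: "nat \<Rightarrow> (nat \<Rightarrow> int) \<Rightarrow> (nat \<Rightarrow> int) \<Rightarrow> bool" where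
  "nn_adj d y z \<longleftrightarrow> (\<Sum>j<d. \<bar>y j - z j\<bar>) = 1"

definition nn_connected :: "nat \<Rightarrow> (nat \<Rightarrow> int) set \<Rightarrow> bool" where
  "nn_connected d S \<longleftrightarrow>
     (\<forall>y\<in>S. \<forall>z\<in>S. (\<lambda>a b. a \<in> S \<and> b \<in> S \<and> nn_adj d a b)\<^sup>*\<^sup>* y z)"

end

theory Submission
  imports Defs
begin


definition base :: "nat \<Rightarrow> nat \<Rightarrow> nat \<Rightarrow> (nat \<Rightarrow> int) set" where
  "base d L i = {a \<in> box d L. a i = 0}"
definition line :: "nat \<Rightarrow> nat \<Rightarrow> (nat \<Rightarrow> int) \<Rightarrow> (nat \<Rightarrow> int) set" where
  "line L i a = (\<lambda>t. a(i := t)) ` {0..<int L}"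
definition full :: "nat \<Rightarrow> nat \<Rightarrow> (nat \<Rightarrow> int) set \<Rightarrow> nat \<Rightarrow> (nat \<Rightarrow> int) set" where
  "full d L G i = {a \<in> base d L i. line L i a \<subseteq> G}"

lemma box_0: "box 0 L = {\<lambda>_. 0}"
  by (auto simp: box_def fun_eq_iff)

lemma box_Suc: "box (Suc d) L = (\<lambda>(z,t). z(d:=t)) ` (box d L \<times> {0..<int L})"
proof
  show "box (Suc d) L \<subseteq> (\<lambda>(z,t). z(d:=t)) ` (box d L \<times> {0..<int L})"
  proof
    fix y assume y: "y \<in> box (Suc d) L"
    have "y = (\<lambda>(z,t). z(d:=t)) (y(d:=0), y d)" by simp
    moreover have "(y(d:=0), y d) \<in> box d L \<times> {0..<int L}"
      using y by (auto simp: box_def less_Suc_eq)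
    ultimately show "y \<in> (\<lambda>(z,t). z(d:=t)) ` (box d L \<times> {0..<int L})" by blast
  qed
  show "(\<lambda>(z,t). z(d:=t)) ` (box d L \<times> {0..<int L}) \<subseteq> box (Suc d) L"
    by (auto simp: box_def less_Suc_eq)
qed

lemma box_zero: "z \<in> box d L \<Longrightarrow> j \<ge> d \<Longrightarrow> z j = 0"
  by (auto simp: box_def)

lemma inj_upd: "inj_on (\<lambda>(z,t). z(d:=t)) (box d L \<times> A)"
  by (auto simp: inj_on_def box_def fun_eq_iff)

lemma finite_box: "finite (box d L)"
  by (induction d) (auto simp: box_0 box_Suc)

lemma card_box: "card (box d L) = L ^ d"
proof (induction d)
  case 0 then show ?case by (simp add: box_0)
next
  case (Suc d)
  have "card (box (Suc d) L) = card (box d L \<times> {0..<int L})"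
    unfolding box_Suc by (rule card_image[OF inj_upd])
  also have "\<dots> = L^d * L" using Suc by (simp add: card_cartesian_product)
  finally show ?case by simp
qed

lemma box_split_bij: "i < d \<Longrightarrow> bij_betw (\<lambda>y. (y(i:=0), y i)) (box d L) (base d L i \<times> {0..<int L})"
  apply (rule bij_betw_byWitness[where f'="\<lambda>(z,t). z(i:=t)"])
  apply (auto simp: box_def base_def)
  done

lemma card_base: assumes "i < d" "L \<ge> 1" shows "card (base d L i) = L ^ (d - 1)"
proof -
  have "L ^ d = card (base d L i) * L"
    using bij_betw_same_card[OF box_split_bij[OF assms(1)]] by (simp add: card_box card_cartesian_product)
  moreover have "L ^ d = L^(d-1) * L" using assms by (cases d) auto
  ultimately show ?thesis using assms by simp
qed

lemma base_last: "L \<ge> 1 \<Longrightarrow> base (Suc m) L m = box m L"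
  apply (auto simp: base_def box_def less_Suc_eq)
  by (metis le_eq_less_or_eq Suc_le_eq)

lemma finite_base: "finite (base d L i)"
  using finite_box by (auto simp: base_def)

lemma card_line: "card (line L i a) = L"
proof -
  have "inj_on (\<lambda>t. a(i := t)) {0..<int L}" by (auto simp: inj_on_def fun_eq_iff)
  then show ?thesis by (simp add: line_def card_image)
qed

lemma adj_sym: "nn_adj d a b = nn_adj d b a"
  by (simp add: nn_adj_def abs_minus_commute)

lemma adj_line: "i < d \<Longrightarrow> nn_adj d (a(i:=t)) (a(i:=t+1))"
proof -
  assume i: "i < d"
  have "(\<Sum>j<d. \<bar>(a(i:=t)) j - (a(i:=t+1)) j\<bar>) = (\<Sum>j<d. if j = i then 1 else 0)"
    by (rule sum.cong) auto
  also have "\<dots> = 1" using i by simp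
  finally show ?thesis by (simp add: nn_adj_def)
qed

definition RS :: "nat \<Rightarrow> (nat \<Rightarrow> int) set \<Rightarrow> (nat \<Rightarrow> int) \<Rightarrow> (nat \<Rightarrow> int) \<Rightarrow> bool" where
  "RS d S = (\<lambda>a b. a \<in> S \<and> b \<in> S \<and> nn_adj d a b)"

lemma conn_RS: "nn_connected d S \<longleftrightarrow> (\<forall>y\<in>S. \<forall>z\<in>S. (RS d S)\<^sup>*\<^sup>* y z)"
  by (simp add: nn_connected_def RS_def)

lemma RS_sym: "(RS d S)\<^sup>*\<^sup>* a b \<Longrightarrow> (RS d S)\<^sup>*\<^sup>* b a"
proof (induction rule: rtranclp_induct)
  case base then show ?case by simp
next
  case (step y z)
  then have "RS d S z y" by (auto simp: RS_def adj_sym)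
  then show ?case using step by (meson converse_rtranclp_into_rtranclp)
qed

lemma rtranclp_map: assumes "\<And>a b. R1 a b \<Longrightarrow> R2 (f a) (f b)" and "R1\<^sup>*\<^sup>* a b"
  shows "R2\<^sup>*\<^sup>* (f a) (f b)"
  using assms(2) by (induction rule: rtranclp_induct) (auto intro: rtranclp.rtrancl_into_rtrancl assms(1))

lemma line_path_up:
  assumes "i < d" "line L i a \<subseteq> S" "0 \<le> t"
  shows "t + int k < int L \<Longrightarrow> (RS d S)\<^sup>*\<^sup>* (a(i:=t)) (a(i:=t + int k))"
proof (induction k)
  case 0 then show ?case by simp
next
  case (Suc k)
  have "t + int k < int L" using Suc.prems by simp
  then have "(RS d S)\<^sup>*\<^sup>* (a(i:=t)) (a(i:=t + int k))" by (rule Suc.IH)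
  moreover have "RS d S (a(i:=t + int k)) (a(i:=t + int k + 1))"
    unfolding RS_def using assms Suc.prems adj_line[OF assms(1)] by (auto simp: line_def)
  ultimately have "(RS d S)\<^sup>*\<^sup>* (a(i:=t)) (a(i:=t + int k + 1))" by (metis rtranclp.rtrancl_into_rtrancl)
  moreover have eq: "t + int (Suc k) = t + int k + 1" by simp
  ultimately show ?case by (simp only: eq)
qed

lemma line_path:
  assumes "i < d" "line L i a \<subseteq> S" "0 \<le> t" "t < int L" "0 \<le> s" "s < int L"
  shows "(RS d S)\<^sup>*\<^sup>* (a(i:=t)) (a(i:=s))"
proof (cases "t \<le> s")
  case True
  then show ?thesis using line_path_up[OF assms(1,2,3), of "nat (s - t)"] assms by simp
next
  case False
  then have "(RS d S)\<^sup>*\<^sup>* (a(i:=s)) (a(i:=t))"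
    using line_path_up[OF assms(1,2,5), of "nat (t - s)"] assms by simp
  then show ?thesis by (rule RS_sym)
qed



lemma line_eq_col:
  assumes "i < d" "a \<in> base d L i"
  shows "line L i a = {y \<in> box d L. \<forall>j<d. j \<noteq> i \<longrightarrow> y j = a j}"
proof
  show "line L i a \<subseteq> {y \<in> box d L. \<forall>j<d. j \<noteq> i \<longrightarrow> y j = a j}"
    using assms by (auto simp: line_def base_def box_def)
  show "{y \<in> box d L. \<forall>j<d. j \<noteq> i \<longrightarrow> y j = a j} \<subseteq> line L i a"
  proof
    fix y assume y: "y \<in> {y \<in> box d L. \<forall>j<d. j \<noteq> i \<longrightarrow> y j = a j}"
    have "y = a(i := y i)"
    proof
      fix j show "y j = (a(i := y i)) j"
        using y assms by (cases "j < d") (auto simp: base_def box_def)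
    qed
    moreover have "y i \<in> {0..<int L}" using y assms by (auto simp: box_def)
    ultimately show "y \<in> line L i a" unfolding line_def by blast
  qed
qed

lemma card_cols:
  assumes "i < d" "L \<ge> 1"
  shows "card {C. column d L i C \<and> C \<subseteq> G} = card (full d L G i)"
proof -
  have inj: "inj_on (line L i) (full d L G i)"
  proof
    fix a b assume a: "a \<in> full d L G i" and b: "b \<in> full d L G i" and e: "line L i a = line L i b"
    have "a = a(i:=0)" using a by (auto simp: full_def base_def)
    moreover have "a(i:=0) \<in> line L i a" using assms by (auto simp: line_def)
    ultimately have "a \<in> line L i b" using e by simp
    then obtain t where t: "a = b(i:=t)" by (auto simp: line_def)
    then have "t = 0" using a by (auto simp: full_def base_def dest: fun_cong[where x=i])
    then show "a = b" using t b by (auto simp: full_def base_def)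
  qed
  have img: "line L i ` full d L G i = {C. column d L i C \<and> C \<subseteq> G}"
  proof
    show "line L i ` full d L G i \<subseteq> {C. column d L i C \<and> C \<subseteq> G}"
    proof
      fix C assume "C \<in> line L i ` full d L G i"
      then obtain a where a: "a \<in> full d L G i" "C = line L i a" by auto
      have ab: "a \<in> base d L i" using a by (auto simp: full_def)
      have "column d L i C" unfolding column_def
        using ab assms line_eq_col[OF assms(1) ab] a by (auto simp: base_def box_def)
      then show "C \<in> {C. column d L i C \<and> C \<subseteq> G}" using a by (auto simp: full_def)
    qed
    show "{C. column d L i C \<and> C \<subseteq> G} \<subseteq> line L i ` full d L G i"
    proof
      fix C assume "C \<in> {C. column d L i C \<and> C \<subseteq> G}"
      then obtain a where a: "\<forall>j<d. j \<noteq> i \<longrightarrow> 0 \<le> a j \<and> a j < int L"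
        and C: "C = {y \<in> box d L. \<forall>j<d. j \<noteq> i \<longrightarrow> y j = a j}" and CG: "C \<subseteq> G"
        by (auto simp: column_def)
      define a' where "a' = (\<lambda>j. if j < d \<and> j \<noteq> i then a j else 0)"
      have ab: "a' \<in> base d L i" using a assms by (auto simp: a'_def base_def box_def)
      have "C = line L i a'" unfolding line_eq_col[OF assms(1) ab] C by (auto simp: a'_def)
      then show "C \<in> line L i ` full d L G i" using ab CG by (auto simp: full_def)
    qed
  qed
  show ?thesis using bij_betw_same_card[of "line L i"] inj img unfolding bij_betw_def by metis
qed

definition sl :: "nat \<Rightarrow> nat \<Rightarrow> (nat \<Rightarrow> int) set \<Rightarrow> int \<Rightarrow> (nat \<Rightarrow> int) set" where
  "sl L m G t = {z \<in> box m L. z(m:=t) \<in> G}"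

lemma full_split:
  assumes "i < m"
  shows "card (full (Suc m) L G i) = (\<Sum>t\<in>{0..<int L}. card (full m L (sl L m G t) i))"
proof -
  have bij: "bij_betw (\<lambda>a. (a m, a(m:=0))) (full (Suc m) L G i) (SIGMA t:{0..<int L}. full m L (sl L m G t) i)"
  proof (rule bij_betw_byWitness[where f'="\<lambda>(t,b). b(m:=t)"])
    show "\<forall>a\<in>full (Suc m) L G i. (\<lambda>(t,b). b(m:=t)) (a m, a(m:=0)) = a" by simp
    show "\<forall>p\<in>(SIGMA t:{0..<int L}. full m L (sl L m G t) i). (\<lambda>a. (a m, a(m:=0))) ((\<lambda>(t,b). b(m:=t)) p) = p"
      by (auto simp: full_def base_def box_def fun_eq_iff)
    show "(\<lambda>a. (a m, a(m:=0))) ` full (Suc m) L G i \<subseteq> (SIGMA t:{0..<int L}. full m L (sl L m G t) i)"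
    proof
      fix p assume "p \<in> (\<lambda>a. (a m, a(m:=0))) ` full (Suc m) L G i"
      then obtain a where a: "a \<in> full (Suc m) L G i" and p: "p = (a m, a(m:=0))" by auto
      have abox: "a \<in> box (Suc m) L" and ai: "a i = 0" and al: "line L i a \<subseteq> G"
        using a by (auto simp: full_def base_def)
      have am: "a m \<in> {0..<int L}" using abox by (auto simp: box_def)
      have b1: "a(m:=0) \<in> box m L" using abox by (auto simp: box_def less_Suc_eq)
      have "line L i (a(m:=0)) \<subseteq> sl L m G (a m)"
      proof
        fix z assume "z \<in> line L i (a(m:=0))"
        then obtain s where s: "s \<in> {0..<int L}" "z = (a(m:=0))(i:=s)" by (auto simp: line_def)
        have "z \<in> box m L" using s b1 assms by (auto simp: box_def)
        moreover have "z(m := a m) = a(i:=s)" using s assms by (auto simp: fun_eq_iff)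
        moreover have "a(i:=s) \<in> G" using al s by (auto simp: line_def)
        ultimately show "z \<in> sl L m G (a m)" by (simp add: sl_def)
      qed
      then show "p \<in> (SIGMA t:{0..<int L}. full m L (sl L m G t) i)"
        using p am b1 ai assms by (auto simp: full_def base_def)
    qed
    show "(\<lambda>(t,b). b(m:=t)) ` (SIGMA t:{0..<int L}. full m L (sl L m G t) i) \<subseteq> full (Suc m) L G i"
    proof
      fix a assume "a \<in> (\<lambda>(t,b). b(m:=t)) ` (SIGMA t:{0..<int L}. full m L (sl L m G t) i)"
      then obtain t b where t: "t \<in> {0..<int L}" and b: "b \<in> full m L (sl L m G t) i" and a: "a = b(m:=t)"
        by auto
      have bbox: "b \<in> box m L" and bi: "b i = 0" and bl: "line L i b \<subseteq> sl L m G t"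
        using b by (auto simp: full_def base_def)
      have "a \<in> box (Suc m) L" using bbox t a by (auto simp: box_def less_Suc_eq)
      moreover have "a i = 0" using a bi assms by simp
      moreover have "line L i a \<subseteq> G"
      proof
        fix z assume "z \<in> line L i a"
        then obtain s where s: "s \<in> {0..<int L}" "z = a(i:=s)" by (auto simp: line_def)
        have "b(i:=s) \<in> sl L m G t" using bl s by (auto simp: line_def)
        moreover have "(b(i:=s))(m:=t) = z" using s a assms by (auto simp: fun_eq_iff)
        ultimately show "z \<in> G" by (simp add: sl_def)
      qed
      ultimately show "a \<in> full (Suc m) L G i" by (simp add: full_def base_def)
    qed
  qed
  have "card (full (Suc m) L G i) = card (SIGMA t:{0..<int L}. full m L (sl L m G t) i)"
    by (rule bij_betw_same_card[OF bij])
  also have "\<dots> = (\<Sum>t\<in>{0..<int L}. card (full m L (sl L m G t) i))"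
    by (rule card_SigmaI) (auto intro: finite_subset[OF _ finite_base] simp: full_def)
  finally show ?thesis .
qed

lemma adj_emb: "nn_adj (Suc m) (z(m:=t)) (w(m:=t)) = nn_adj m z w"
proof -
  have "(\<Sum>j<Suc m. \<bar>(z(m:=t)) j - (w(m:=t)) j\<bar>) = (\<Sum>j<m. \<bar>z j - w j\<bar>)"
    by (simp add: sum.lessThan_Suc)
  then show ?thesis by (simp add: nn_adj_def)
qed

lemma card_inter: "finite U \<Longrightarrow> A \<subseteq> U \<Longrightarrow> B \<subseteq> U \<Longrightarrow> card A + card B \<le> card (A \<inter> B) + card U"
  by (metis card_Un_Int card_mono finite_subset Un_subset_iff add.commute add_le_cancel_left)



lemma core_base:
  assumes "L \<ge> 1" "0 \<le> x" "x < 1 / fact (2*1-1)" "G \<subseteq> box 1 L"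
    and "\<forall>i<1. real (card (full 1 L G i)) \<ge> (1-x) * real L ^ (1-1)"
  shows "\<exists>S\<subseteq>G. nn_connected 1 S \<and> real (card S) \<ge> (1 - fact (2*1-1) * x) * real L ^ 1"
proof -
  have "real (card (full 1 L G 0)) > 0" using assms(3,5) by auto
  then obtain a where a: "a \<in> full 1 L G 0" by (metis card.empty equals0I of_nat_0 less_irrefl)
  then have sub: "line L 0 a \<subseteq> G" by (simp add: full_def)
  have "nn_connected 1 (line L 0 a)" unfolding conn_RS
  proof (intro ballI)
    fix y z assume "y \<in> line L 0 a" "z \<in> line L 0 a"
    then obtain t s where "y = a(0:=t)" "z = a(0:=s)" "t \<in> {0..<int L}" "s \<in> {0..<int L}"
      by (auto simp: line_def)
    then show "(RS 1 (line L 0 a))\<^sup>*\<^sup>* y z" using line_path[of 0 1 L a "line L 0 a" t s] by auto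
  qed
  moreover have "real (card (line L 0 a)) \<ge> (1 - fact (2*1-1) * x) * real L ^ 1"
    using assms(2) mult_nonneg_nonneg[of x "real L"] by (simp add: card_line algebra_simps)
  ultimately show ?thesis using sub by blast
qed



lemma core_step:
  fixes m L :: nat and x :: real and G :: "(nat \<Rightarrow> int) set"
  assumes m1: "m \<ge> 1" and L1: "L \<ge> 1"
    and IH: "\<And>x G. 0 \<le> x \<Longrightarrow> x < 1 / fact (2*m-1) \<Longrightarrow> G \<subseteq> box m L \<Longrightarrow>
        (\<forall>i<m. real (card (full m L G i)) \<ge> (1-x) * real L ^ (m-1)) \<Longrightarrow>
        \<exists>S\<subseteq>G. nn_connected m S \<and> real (card S) \<ge> (1 - fact (2*m-1) * x) * real L ^ m"
    and x0: "0 \<le> x" and x1: "x < 1 / fact (2*Suc m-1)" and GB: "G \<subseteq> box (Suc m) L"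
    and hyp: "\<forall>i<Suc m. real (card (full (Suc m) L G i)) \<ge> (1-x) * real L ^ (Suc m-1)"
  shows "\<exists>S\<subseteq>G. nn_connected (Suc m) S \<and> real (card S) \<ge> (1 - fact (2*Suc m-1) * x) * real L ^ Suc m"
proof -
  define n' :: real where "n' = fact (2*m-1)"
  define N :: real where "N = fact (2*Suc m-1)"
  have n'1: "n' \<ge> 1" unfolding n'_def by simp
  have NN: "N = real ((2*m+1)*(2*m)) * n'"
  proof -
    have e: "2*Suc m - 1 = Suc (Suc (2*m-1))" using m1 by simp
    have e2: "Suc (2*m-1) = 2*m" using m1 by simp
    have f1: "(fact (2*m) :: real) = real (2*m) * fact (2*m-1)"
      using fact_Suc[of "2*m-1", where 'a=real] e2 by simp
    have f2: "(fact (Suc (Suc (2*m-1))) :: real) = real (2*m+1) * fact (2*m)"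
      using fact_Suc[of "2*m", where 'a=real] e2 by simp
    show ?thesis unfolding N_def n'_def e f2 f1 by (simp add: algebra_simps)
  qed
  have n'0: "n' > 0" using n'1 by simp
  have N4: "4 * real m * n' \<le> N"
  proof -
    have "4 * m \<le> (2*m+1)*(2*m)" using m1 by (simp add: algebra_simps)
    then have h: "4 * real m \<le> real ((2*m+1)*(2*m))"
      by (metis of_nat_le_iff of_nat_mult of_nat_numeral)
    show ?thesis unfolding NN by (rule mult_right_mono[OF h]) (use n'1 in auto)
  qed
  have m1r: "real m \<ge> 1" using m1 by simp
  have "real m * n' \<ge> 1 * 1" by (rule mult_mono) (use m1r n'1 in auto)
  then have N2: "N \<ge> 2" using N4 by linarith
  have "1 / N \<le> 1 / 2" using N2 by (simp add: field_simps)
  then have xhalf: "x < 1/2" using x1 unfolding N_def by linarith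
  define P :: real where "P = real L ^ (m-1)"
  have P0: "P > 0" using L1 by (simp add: P_def)
  have LP: "real L * P = real L ^ m" using m1 unfolding P_def
    by (metis Suc_pred' less_le_trans zero_less_one power_Suc)
  define f where "f i t = real (card (full m L (sl L m G t) i))" for i t
  have fP: "f i t \<le> P" if "i < m" for i t
  proof -
    have "card (full m L (sl L m G t) i) \<le> card (base m L i)"
      by (rule card_mono[OF finite_base]) (auto simp: full_def)
    then show ?thesis using card_base[OF that L1] unfolding f_def P_def by simp
  qed
  define \<delta> where "\<delta> t = (\<Sum>i<m. P - f i t)" for t
  define y where "y t = \<delta> t / P" for t
  have y0: "y t \<ge> 0" for t unfolding y_def \<delta>_def using P0 fP by (auto intro!: sum_nonneg divide_nonneg_pos)
  define I where "I = {t \<in> {0..<int L}. y t \<le> 1/(4*n')}"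
  have Isub: "I \<subseteq> {0..<int L}" by (auto simp: I_def)
  have "\<forall>t\<in>I. \<exists>C. C \<subseteq> sl L m G t \<and> nn_connected m C \<and> real (card C) \<ge> (1 - n' * y t) * real L ^ m"
  proof
    fix t assume t: "t \<in> I"
    have "1/(4*n') < 1/n'" using n'0 by (simp add: field_simps)
    then have "y t < 1 / n'" using t unfolding I_def by auto
    moreover have "sl L m G t \<subseteq> box m L" by (auto simp: sl_def)
    moreover have "\<forall>i<m. real (card (full m L (sl L m G t) i)) \<ge> (1 - y t) * real L ^ (m-1)"
    proof (intro allI impI)
      fix i assume i: "i < m"
      have "P - f i t \<le> \<delta> t" unfolding \<delta>_def
        by (rule member_le_sum[where f="\<lambda>i. P - f i t"]) (use i fP in auto)
      moreover have "(1 - y t) * P = P - \<delta> t" using P0 by (simp add: y_def algebra_simps)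
      ultimately show "real (card (full m L (sl L m G t) i)) \<ge> (1 - y t) * real L ^ (m-1)"
        unfolding f_def P_def[symmetric] by linarith
    qed
    ultimately show "\<exists>C. C \<subseteq> sl L m G t \<and> nn_connected m C \<and> real (card C) \<ge> (1 - n' * y t) * real L ^ m"
      using IH[OF y0] unfolding n'_def by blast
  qed
  then obtain C where C: "\<And>t. t \<in> I \<Longrightarrow> C t \<subseteq> sl L m G t \<and> nn_connected m (C t) \<and> real (card (C t)) \<ge> (1 - n' * y t) * real L ^ m"
    by metis
  have Cbox: "C t \<subseteq> box m L" if "t \<in> I" for t using C[OF that] by (auto simp: sl_def)
  define F where "F = full (Suc m) L G m"
  have Fbox: "F \<subseteq> box m L" unfolding F_def using base_last[OF L1] by (auto simp: full_def)
  have Fcard: "real (card F) \<ge> (1-x) * real L ^ m" using hyp unfolding F_def by auto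
  define S where "S = (\<Union>t\<in>I. (\<lambda>z. z(m:=t)) ` C t) \<union> (\<Union>a\<in>{a\<in>F. \<exists>t\<in>I. a \<in> C t}. line L m a)"
  have SG: "S \<subseteq> G"
    unfolding S_def using C by (auto simp: sl_def F_def full_def)
  have Cbig: "real (card (C t)) \<ge> 3/4 * real L ^ m" if "t \<in> I" for t
  proof -
    have "n' * y t \<le> 1/4" using that n'1 unfolding I_def
      by (auto simp: field_simps)
    then have "(1 - n' * y t) * real L ^ m \<ge> 3/4 * real L ^ m"
      by (intro mult_right_mono) auto
    then show ?thesis using C[OF that] by linarith
  qed
  have meet: "\<exists>a. a \<in> C t \<and> a \<in> C s \<and> a \<in> F" if "t \<in> I" "s \<in> I" for t s
  proof -
    have U: "finite (box m L)" by (rule finite_box)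
    have "card (C t) + card (C s) \<le> card (C t \<inter> C s) + card (box m L)"
      by (rule card_inter[OF U Cbox[OF that(1)] Cbox[OF that(2)]])
    moreover have "card (C t \<inter> C s) + card F \<le> card (C t \<inter> C s \<inter> F) + card (box m L)"
      by (rule card_inter[OF U]) (use Cbox[OF that(1)] Fbox in auto)
    ultimately have "card (C t) + card (C s) + card F \<le> card (C t \<inter> C s \<inter> F) + 2 * L ^ m"
      by (simp add: card_box)
    then have "real (card (C t) + card (C s) + card F) \<le> real (card (C t \<inter> C s \<inter> F) + 2 * L ^ m)"
      by (simp only: of_nat_le_iff)
    then have "real (card (C t)) + real (card (C s)) + real (card F) \<le> real (card (C t \<inter> C s \<inter> F)) + 2 * real L ^ m"
      by simp
    moreover have "(3/4) * real L ^ m + (3/4) * real L ^ m + (1 - x) * real L ^ m > 2 * real L ^ m"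
    proof -
      have "real L ^ m > 0" using L1 by simp
      then have "(1/2 - x) * real L ^ m > 0" using xhalf by (intro mult_pos_pos) auto
      moreover have "(3/4) * real L ^ m + (3/4) * real L ^ m + (1 - x) * real L ^ m - 2 * real L ^ m = (1/2 - x) * real L ^ m"
        by (simp add: algebra_simps)
      ultimately show ?thesis by linarith
    qed
    ultimately have "real (card (C t \<inter> C s \<inter> F)) > 0"
      using Cbig[OF that(1)] Cbig[OF that(2)] Fcard by linarith
    then show ?thesis by (metis card.empty of_nat_0 less_irrefl equals0I IntE)
  qed
  let ?R = "RS (Suc m) S"
  have emb_path: "?R\<^sup>*\<^sup>* (u(m:=t)) (v(m:=t))" if "t \<in> I" "u \<in> C t" "v \<in> C t" for t u v
  proof -
    have "(RS m (C t))\<^sup>*\<^sup>* u v" using C[OF that(1)] that(2,3) by (simp add: conn_RS)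
    then show ?thesis
      by (rule rtranclp_map[where f="\<lambda>z. z(m:=t)", rotated])
        (use that(1) in \<open>auto simp: RS_def adj_emb S_def\<close>)
  qed
  have Ltr: "line L m a \<subseteq> S" if "a \<in> F" "t \<in> I" "a \<in> C t" for a t
    using that unfolding S_def by blast
  have lpath: "?R\<^sup>*\<^sup>* (a(m:=t)) (a(m:=s))" if "a \<in> F" "t' \<in> I" "a \<in> C t'"
     "t \<in> {0..<int L}" "s \<in> {0..<int L}" for a t s t'
    using line_path[of m "Suc m" L a S t s] Ltr[OF that(1-3)] that(4,5) by auto
  have tI: "t \<in> {0..<int L}" if "t \<in> I" for t using that Isub by auto
  have reach: "\<exists>t u. t \<in> I \<and> u \<in> C t \<and> ?R\<^sup>*\<^sup>* p (u(m:=t))" if "p \<in> S" for p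
  proof -
    from that consider (a) t u where "t \<in> I" "u \<in> C t" "p = u(m:=t)"
      | (b) a t s where "a \<in> F" "t \<in> I" "a \<in> C t" "s \<in> {0..<int L}" "p = a(m:=s)"
      unfolding S_def line_def by blast
    then show ?thesis
    proof cases
      case a then show ?thesis by blast
    next
      case b
      then have "?R\<^sup>*\<^sup>* p (a(m:=t))" using lpath[of a t s t] tI by auto
      then show ?thesis using b by blast
    qed
  qed
  have conn: "nn_connected (Suc m) S" unfolding conn_RS
  proof (intro ballI)
    fix p q assume p: "p \<in> S" and q: "q \<in> S"
    obtain t u where tu: "t \<in> I" "u \<in> C t" "?R\<^sup>*\<^sup>* p (u(m:=t))" using reach[OF p] by blast
    obtain s v where sv: "s \<in> I" "v \<in> C s" "?R\<^sup>*\<^sup>* q (v(m:=s))" using reach[OF q] by blast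
    obtain a where a: "a \<in> C t" "a \<in> C s" "a \<in> F" using meet[OF tu(1) sv(1)] by blast
    have "?R\<^sup>*\<^sup>* (u(m:=t)) (a(m:=t))" using emb_path[OF tu(1,2) a(1)] .
    moreover have "?R\<^sup>*\<^sup>* (a(m:=t)) (a(m:=s))" using lpath[OF a(3) tu(1) a(1)] tI tu(1) sv(1) by auto
    moreover have "?R\<^sup>*\<^sup>* (a(m:=s)) (v(m:=s))" using emb_path[OF sv(1) a(2) sv(2)] .
    moreover have "?R\<^sup>*\<^sup>* (v(m:=s)) q" using RS_sym[OF sv(3)] .
    ultimately have "?R\<^sup>*\<^sup>* (u(m:=t)) q" by (metis rtranclp_trans)
    with tu(3) show "?R\<^sup>*\<^sup>* p q" by (rule rtranclp_trans)
  qed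
  have finI: "finite I" by (rule finite_subset[OF Isub]) simp
  have finS: "finite S" by (rule finite_subset[OF _ finite_box]) (use SG GB in blast)
  have "card (\<Union>t\<in>I. (\<lambda>z. z(m:=t)) ` C t) = (\<Sum>t\<in>I. card ((\<lambda>z. z(m:=t)) ` C t))"
  proof (rule card_UN_disjoint[OF finI])
    show "\<forall>t\<in>I. finite ((\<lambda>z. z(m:=t)) ` C t)"
      using Cbox by (auto intro: finite_subset[OF _ finite_box])
    show "\<forall>t\<in>I. \<forall>s\<in>I. t \<noteq> s \<longrightarrow> (\<lambda>z. z(m:=t)) ` C t \<inter> (\<lambda>z. z(m:=s)) ` C s = {}"
    proof (intro ballI impI)
      fix t s assume "t \<in> I" "s \<in> I" "t \<noteq> s"
      show "(\<lambda>z. z(m:=t)) ` C t \<inter> (\<lambda>z. z(m:=s)) ` C s = {}"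
      proof (rule ccontr)
        assume "(\<lambda>z. z(m:=t)) ` C t \<inter> (\<lambda>z. z(m:=s)) ` C s \<noteq> {}"
        then obtain z w where "z(m:=t) = w(m:=s)" by blast
        then have "(z(m:=t)) m = (w(m:=s)) m" by simp
        then show False using \<open>t \<noteq> s\<close> by simp
      qed
    qed
  qed
  also have "\<dots> = (\<Sum>t\<in>I. card (C t))"
  proof (rule sum.cong[OF refl])
    fix t assume t: "t \<in> I"
    have "inj_on (\<lambda>z. z(m:=t)) (C t)"
    proof
      fix z w assume z: "z \<in> C t" and w: "w \<in> C t" and e: "z(m:=t) = w(m:=t)"
      have "z m = 0" "w m = 0" using Cbox[OF t] z w box_zero by auto
      have "z = (z(m:=t))(m:=0)" using \<open>z m = 0\<close> fun_upd_idem[of z m 0] by simp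
      also have "\<dots> = (w(m:=t))(m:=0)" using e by simp
      also have "\<dots> = w" using \<open>w m = 0\<close> fun_upd_idem[of w m 0] by simp
      finally show "z = w" .
    qed
    then show "card ((\<lambda>z. z(m:=t)) ` C t) = card (C t)" by (rule card_image)
  qed
  finally have cardU: "card (\<Union>t\<in>I. (\<lambda>z. z(m:=t)) ` C t) = (\<Sum>t\<in>I. card (C t))" .
  have "card (\<Union>t\<in>I. (\<lambda>z. z(m:=t)) ` C t) \<le> card S"
    by (rule card_mono[OF finS]) (auto simp: S_def)
  then have c1: "real (card S) \<ge> (\<Sum>t\<in>I. real (card (C t)))" using cardU by (metis of_nat_le_iff of_nat_sum)
  have c2: "(\<Sum>t\<in>I. real (card (C t))) \<ge> (\<Sum>t\<in>I. (1 - n' * y t) * real L ^ m)"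
    by (rule sum_mono) (use C in auto)
  have c3: "(\<Sum>t\<in>I. (1 - n' * y t) * real L ^ m) = (\<Sum>t\<in>{0..<int L}. if t \<in> I then (1 - n' * y t) * real L ^ m else 0)"
    using sum.inter_restrict[of "{0..<int L}" "\<lambda>t. (1 - n' * y t) * real L ^ m" I] Isub
    by (simp add: Int_absorb1)
  have c4: "(\<Sum>t\<in>{0..<int L}. if t \<in> I then (1 - n' * y t) * real L ^ m else 0) \<ge> (\<Sum>t\<in>{0..<int L}. (1 - 4 * n' * y t) * real L ^ m)"
  proof (rule sum_mono)
    fix t assume t: "t \<in> {0..<int L}"
    have Lm: "real L ^ m \<ge> 0" by simp
    show "(1 - 4 * n' * y t) * real L ^ m \<le> (if t \<in> I then (1 - n' * y t) * real L ^ m else 0)"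
    proof (cases "t \<in> I")
      case True
      have "1 - 4 * n' * y t \<le> 1 - n' * y t" using y0[of t] n'1 by (simp add: mult_nonneg_nonneg)
      then show ?thesis using True Lm by (simp add: mult_right_mono)
    next
      case False
      then have "y t > 1/(4*n')" using t unfolding I_def by auto
      then have "4 * n' * y t > 1" using n'1 by (simp add: field_simps)
      then have "1 - 4 * n' * y t \<le> 0" by simp
      then show ?thesis using False Lm by (simp add: mult_nonpos_nonneg)
    qed
  qed
  have sumdelta: "(\<Sum>t\<in>{0..<int L}. \<delta> t) \<le> real m * x * real L ^ m"
  proof -
    have "(\<Sum>t\<in>{0..<int L}. \<delta> t) = (\<Sum>i<m. \<Sum>t\<in>{0..<int L}. P - f i t)"
      unfolding \<delta>_def by (rule sum.swap)
    also have "\<dots> = (\<Sum>i<m. real L ^ m - real (card (full (Suc m) L G i)))"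
    proof (rule sum.cong[OF refl])
      fix i assume i: "i \<in> {..<m}"
      have "(\<Sum>t\<in>{0..<int L}. P - f i t) = real L * P - (\<Sum>t\<in>{0..<int L}. f i t)"
        by (simp add: sum_subtractf)
      also have "(\<Sum>t\<in>{0..<int L}. f i t) = real (card (full (Suc m) L G i))"
        using i full_split[of i m L G] by (simp add: f_def of_nat_sum)
      finally show "(\<Sum>t\<in>{0..<int L}. P - f i t) = real L ^ m - real (card (full (Suc m) L G i))"
        using LP by simp
    qed
    also have "\<dots> \<le> (\<Sum>i<m. x * real L ^ m)"
    proof (rule sum_mono)
      fix i assume "i \<in> {..<m}"
      then have "real (card (full (Suc m) L G i)) \<ge> (1-x) * real L ^ m" using hyp by auto
      then show "real L ^ m - real (card (full (Suc m) L G i)) \<le> x * real L ^ m"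
        by (simp add: algebra_simps)
    qed
    also have "\<dots> = real m * x * real L ^ m" by simp
    finally show ?thesis .
  qed
  have sumy: "(\<Sum>t\<in>{0..<int L}. y t) \<le> real m * x * real L"
  proof -
    have "(\<Sum>t\<in>{0..<int L}. y t) = (\<Sum>t\<in>{0..<int L}. \<delta> t) / P"
      unfolding y_def by (simp add: sum_divide_distrib)
    also have "\<dots> \<le> real m * x * real L ^ m / P"
      using sumdelta P0 by (simp add: divide_right_mono)
    also have "\<dots> = real m * x * real L"
      using LP P0 by (simp add: field_simps)
    finally show ?thesis .
  qed
  have c5: "(\<Sum>t\<in>{0..<int L}. (1 - 4 * n' * y t) * real L ^ m)
      = real L * real L ^ m - 4 * n' * real L ^ m * (\<Sum>t\<in>{0..<int L}. y t)"
  proof -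
    have "(\<Sum>t\<in>{0..<int L}. (1 - 4 * n' * y t) * real L ^ m)
        = (\<Sum>t\<in>{0..<int L}. real L ^ m - (4 * n' * real L ^ m) * y t)"
      by (rule sum.cong) (auto simp: algebra_simps)
    also have "\<dots> = (\<Sum>t\<in>{0..<int L}. real L ^ m) - (4 * n' * real L ^ m) * (\<Sum>t\<in>{0..<int L}. y t)"
      by (simp only: sum_subtractf sum_distrib_left)
    also have "(\<Sum>t\<in>{0..<int L}. real L ^ m) = real L * real L ^ m" by simp
    finally show ?thesis .
  qed
  have "4 * n' * real L ^ m * (\<Sum>t\<in>{0..<int L}. y t) \<le> 4 * n' * real L ^ m * (real m * x * real L)"
    using sumy n'1 by (intro mult_left_mono) auto
  also have "\<dots> = (4 * real m * n') * x * real L ^ Suc m" by (simp add: algebra_simps)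
  also have "\<dots> \<le> N * x * real L ^ Suc m"
    using N4 x0 by (intro mult_right_mono) (auto simp: mult_right_mono)
  finally have c6: "4 * n' * real L ^ m * (\<Sum>t\<in>{0..<int L}. y t) \<le> N * x * real L ^ Suc m" .
  have "real (card S) \<ge> (1 - N * x) * real L ^ Suc m"
  proof -
    have "(1 - N * x) * real L ^ Suc m = real L * real L ^ m - N * x * real L ^ Suc m"
      by (simp add: algebra_simps)
    then show ?thesis using c1 c2 c3 c4 c5 c6 by linarith
  qed
  then show ?thesis using SG conn unfolding N_def by blast
qed


lemma core:
  assumes "m \<ge> 1" "L \<ge> 1"
  shows "\<And>x G. 0 \<le> x \<Longrightarrow> x < 1 / fact (2*m-1) \<Longrightarrow> G \<subseteq> box m L \<Longrightarrow>
        (\<forall>i<m. real (card (full m L G i)) \<ge> (1-x) * real L ^ (m-1)) \<Longrightarrow>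
        \<exists>S\<subseteq>G. nn_connected m S \<and> real (card S) \<ge> (1 - fact (2*m-1) * x) * real L ^ m"
  using assms(1)
proof (induction m rule: nat_induct_at_least)
  case base
  then show ?case using core_base[OF assms(2)] by blast
next
  case (Suc n)
  show ?case by (rule core_step[OF Suc.hyps(1) assms(2) Suc.IH]) (use Suc.prems in auto)
qed

theorem lemma6p1:
  fixes d L :: nat and x :: real and \<Gamma> :: "(nat \<Rightarrow> int) set"
  assumes "d \<ge> 2" and "L \<ge> 1"
    and "0 < x" and "x < 1 / fact (2 * d - 1)"
    and "\<Gamma> \<subseteq> box d L"
    and "\<forall>i<d. real (card {C. column d L i C \<and> C \<subseteq> \<Gamma>}) \<ge> (1 - x) * real L ^ (d - 1)"
  shows "\<exists>S \<subseteq> \<Gamma>. nn_connected d S \<and> real (card S) \<ge> (1 - fact (2 * d - 1) * x) * real L ^ d"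
proof -
  have "\<forall>i<d. real (card (full d L \<Gamma> i)) \<ge> (1 - x) * real L ^ (d - 1)"
    using assms(6) card_cols[OF _ assms(2)] by metis
  then show ?thesis using core[of d L x \<Gamma>] assms by auto
qed

end
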